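(* Let $\alpha_s=(1+\rho)/\rho$ and for $x^n\in\{0,1\}^n$ let $\ell_s(x^n)=\lceil-\log_2(\alpha_s p(x^n))\rceil+1$. Define the Shannon–Fano–Elias–Gray (SFEG) code $\phi_{\mathrm{SFEG}}:\{0,1\}^n\to\{0,1\}^*$ by letting $\phi_{\mathrm{SFEG}}(x^n)$ be the binary string of length $\ell_s(x^n)$ consisting of the first $\ell_s(x^n)$ bits of the binary expansion of $F(x^n-1)+p(x^n)/2$, where $F$ is the cumulative distribution function under Gray order. Then (a) $\phi_{\mathrm{SFEG}}$ is uniquely decodable, i.e. the map $(x^n_{(1)},\dots,x^n_{(k)})\mapsto\phi_{\mathrm{SFEG}}(x^n_{(1)})\cdots\phi_{\mathrm{SFEG}}(x^n_{(k)})$ (concatenation), taken over all $k\ge 1$ and all $k$-tuples of sequences in $\{0,1\}^n$, is injective; and (b) for $X^n$ i.i.d. with distribution $p$, $$\mathbb{E}\big[|\phi_{\mathrm{SFEG}}(X^n)|\big]<nH(X)+2-\log_2\frac{1+\rho}{\rho},$$ where $|u|$ is the length of a string $u$ and $H(X)=-p(0)\log_2p(0)-p(1)\log_2p(1)$.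
   Context: Let $p$ be a probability distribution on $\{0,1\}$ with $p(0),p(1)\in(0,1)$ and $p(0)\ne p(1)$, and set $\rho=\max\{p(0)/p(1),p(1)/p(0)\}\in(1,\infty)$. For $x^n=(x_1,\dots,x_n)\in\{0,1\}^n$, $p(x^n)=\prod_{i=1}^n p(x_i)$. Gray code is the bijection $g:\{0,1\}^n\to\{0,1\}^n$, $g(x^n)=x^n\oplus(0,x_1,\dots,x_{n-1})$ (bitwise XOR of $x^n$ with its one-bit right shift). Gray order $\preceq_G$ on $\{0,1\}^n$ is defined by $x^n\preceq_G y^n$ iff $g^{-1}(x^n)\preceq_L g^{-1}(y^n)$, where $\preceq_L$ is the lexicographic order. For $x^n$ not the largest element, $x^n+1$ denotes its immediate successor in Gray order; for $x^n$ not the smallest element, $x^n-1$ denotes its immediate predecessor. The cumulative distribution function is $F(x^n)=\sum_{a^n\preceq_G x^n}p(a^n)$, with the convention $F(x^n-1):=0$ when $x^n$ is the smallest element in Gray order. Logarithms are base 2. *)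

theory Defs
  imports Complex_Main
begin

text \<open>Binary sequences x^n in {0,1}^n are bool lists of length n (False = 0, True = 1).\<close>

definition gray :: "bool list \<Rightarrow> bool list" where
  "gray xs = map2 (\<noteq>) xs (False # butlast xs)"

definition gray_inv :: "nat \<Rightarrow> bool list \<Rightarrow> bool list" where
  "gray_inv n x = the_inv_into {xs. length xs = n} gray x"

definition lex_le :: "bool list \<Rightarrow> bool list \<Rightarrow> bool" where
  "lex_le xs ys \<longleftrightarrow> xs = ys \<or> (xs, ys) \<in> lexord {(a, b). a = False \<and> b = True}"

definition gray_le :: "nat \<Rightarrow> bool list \<Rightarrow> bool list \<Rightarrow> bool" where
  "gray_le n x y \<longleftrightarrow> lex_le (gray_inv n x) (gray_inv n y)"

definition seqprob :: "(bool \<Rightarrow> real) \<Rightarrow> bool list \<Rightarrow> real" where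
  "seqprob p xs = prod_list (map p xs)"

definition cdf :: "(bool \<Rightarrow> real) \<Rightarrow> nat \<Rightarrow> bool list \<Rightarrow> real" where
  "cdf p n x = (\<Sum>a\<in>{a. length a = n \<and> gray_le n a x}. seqprob p a)"

definition has_gray_pred :: "nat \<Rightarrow> bool list \<Rightarrow> bool" where
  "has_gray_pred n x \<longleftrightarrow> (\<exists>y. length y = n \<and> gray_le n y x \<and> y \<noteq> x)"

definition gray_pred :: "nat \<Rightarrow> bool list \<Rightarrow> bool list" where
  "gray_pred n x = (THE y. length y = n \<and> gray_le n y x \<and> y \<noteq> x \<and>
      (\<forall>z. length z = n \<and> gray_le n z x \<and> z \<noteq> x \<longrightarrow> gray_le n z y))"

text \<open>F(x^n - 1), with the convention F(x^n - 1) = 0 for the Gray-smallest x^n.\<close>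
definition cdf_prev :: "(bool \<Rightarrow> real) \<Rightarrow> nat \<Rightarrow> bool list \<Rightarrow> real" where
  "cdf_prev p n x = (if has_gray_pred n x then cdf p n (gray_pred n x) else 0)"

definition rho :: "(bool \<Rightarrow> real) \<Rightarrow> real" where
  "rho p = max (p False / p True) (p True / p False)"

definition alpha_s :: "(bool \<Rightarrow> real) \<Rightarrow> real" where
  "alpha_s p = (1 + rho p) / rho p"

definition ell_s :: "(bool \<Rightarrow> real) \<Rightarrow> bool list \<Rightarrow> nat" where
  "ell_s p x = nat (\<lceil>- log 2 (alpha_s p * seqprob p x)\<rceil> + 1)"

text \<open>First l bits of the (standard, non-terminating-in-ones) binary expansion of v.\<close>
definition bin_digits :: "real \<Rightarrow> nat \<Rightarrow> bool list" where
  "bin_digits v l = map (\<lambda>i. odd \<lfloor>v * 2 ^ i\<rfloor>) [1..<l+1]"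

definition sfeg :: "(bool \<Rightarrow> real) \<Rightarrow> nat \<Rightarrow> bool list \<Rightarrow> bool list" where
  "sfeg p n x = bin_digits (cdf_prev p n x + seqprob p x / 2) (ell_s p x)"

definition uniquely_decodable :: "nat \<Rightarrow> (bool list \<Rightarrow> bool list) \<Rightarrow> bool" where
  "uniquely_decodable n c \<longleftrightarrow>
     (\<forall>xs ys. xs \<noteq> [] \<longrightarrow> ys \<noteq> [] \<longrightarrow> (\<forall>x\<in>set xs. length x = n) \<longrightarrow>
        (\<forall>y\<in>set ys. length y = n) \<longrightarrow> concat (map c xs) = concat (map c ys) \<longrightarrow> xs = ys)"

definition entropy2 :: "(bool \<Rightarrow> real) \<Rightarrow> real" where
  "entropy2 p = - p False * log 2 (p False) - p True * log 2 (p True)"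

end

theory Submission
  imports Defs
begin

fun g :: "bool \<Rightarrow> bool list \<Rightarrow> bool list" where
  "g c [] = []"
| "g c (b # bs) = (b \<noteq> c) # g b bs"

fun h :: "bool \<Rightarrow> bool list \<Rightarrow> bool list" where
  "h c [] = []"
| "h c (d # ds) = (d \<noteq> c) # h (d \<noteq> c) ds"

lemma length_g[simp]: "length (g c xs) = length xs"
  by (induction xs arbitrary: c) auto
lemma length_h[simp]: "length (h c xs) = length xs"
  by (induction xs arbitrary: c) auto
lemma g_h[simp]: "g c (h c xs) = xs"
  by (induction xs arbitrary: c) auto
lemma h_g[simp]: "h c (g c xs) = xs"
proof (induction xs arbitrary: c)
  case (Cons a xs)
  have "((a = (\<not> c)) = (\<not> c)) = a" by blast
  then show ?case using Cons by simp
qed simp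

lemma map2_g: "map2 (\<noteq>) xs (c # butlast xs) = g c xs"
proof (induction xs arbitrary: c)
  case Nil then show ?case by simp
next
  case (Cons b bs) then show ?case by (cases bs) auto
qed

lemma gray_g: "gray xs = g False xs"
  unfolding gray_def by (rule map2_g)

lemma gray_inv_h: "length x = n \<Longrightarrow> gray_inv n x = h False x"
  unfolding gray_inv_def
proof (rule the_inv_into_f_eq)
  show "inj_on gray {xs. length xs = n}"
    by (rule inj_onI) (metis gray_g h_g)
qed (auto simp: gray_g)

fun val :: "bool list \<Rightarrow> nat" where
  "val [] = 0"
| "val (b # bs) = (if b then 2 ^ length bs else 0) + val bs"

lemma val_less: "val xs < 2 ^ length xs"
proof (induction xs)
  case (Cons b bs) then show ?case by auto
qed simp

lemma lex_val: "length xs = length ys \<Longrightarrow>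
  ((xs, ys) \<in> lexord {(a, b). a = False \<and> b = True} \<longleftrightarrow> val xs < val ys) \<and> (xs = ys \<longleftrightarrow> val xs = val ys)"
proof (induction xs arbitrary: ys)
  case Nil thus ?case by simp
next
  case (Cons a xs)
  then obtain b ys' where ys: "ys = b # ys'" and len: "length xs = length ys'" by (cases ys) auto
  from Cons.IH[OF len] val_less[of xs] val_less[of ys'] len show ?case
    by (cases a; cases b) (auto simp: ys)
qed

definition rk :: "bool list \<Rightarrow> nat" where "rk x = val (h False x)"

lemma gray_le_rk: "length a = n \<Longrightarrow> length b = n \<Longrightarrow> gray_le n a b \<longleftrightarrow> rk a \<le> rk b"
  unfolding gray_le_def lex_le_def rk_def using lex_val[of "h False a" "h False b"]
  by (auto simp: gray_inv_h)

lemma rk_inj: "inj_on rk {x. length x = n}"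
proof (rule inj_onI)
  fix a b assume "a \<in> {x. length x = n}" "b \<in> {x. length x = n}" "rk a = rk b"
  then have "h False a = h False b" using lex_val[of "h False a" "h False b"] by (auto simp: rk_def)
  then show "a = b" by (metis g_h)
qed

lemma card_S: "card {x::bool list. length x = n} = 2 ^ n"
  using card_lists_length_eq[of "UNIV :: bool set" n] by simp

lemma finite_S: "finite {x::bool list. length x = n}"
  using finite_lists_length_eq[of "UNIV :: bool set" n] by simp

lemma rk_bij: "bij_betw rk {x. length x = n} {..<2^n}"
proof -
  have sub: "rk ` {x. length x = n} \<subseteq> {..<2^n}"
    using val_less by (auto simp: rk_def) (metis length_h val_less)
  have "card (rk ` {x. length x = n}) = 2^n"
    using card_image[OF rk_inj] card_S by simp
  then have "rk ` {x. length x = n} = {..<2^n}"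
    using card_subset_eq[OF _ sub] by simp
  then show ?thesis using rk_inj unfolding bij_betw_def by simp
qed

abbreviation S :: "nat \<Rightarrow> bool list set" where "S n \<equiv> {x. length x = n}"

definition sq :: "(bool \<Rightarrow> real) \<Rightarrow> nat \<Rightarrow> nat \<Rightarrow> real" where
  "sq p n k = seqprob p (inv_into (S n) rk k)"

lemma rk_lt: "length x = n \<Longrightarrow> rk x < 2^n"
  using rk_bij[of n] by (auto simp: bij_betw_def)

lemma inv_rk[simp]: "length x = n \<Longrightarrow> inv_into (S n) rk (rk x) = x"
  using rk_inj by (simp add: inv_into_f_f)

lemma inv_in: "k < 2^n \<Longrightarrow> length (inv_into (S n) rk k) = n"
proof -
  assume k: "k < 2^n"
  have "k \<in> rk ` S n" using rk_bij[of n] k unfolding bij_betw_def by simp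
  then have "inv_into (S n) rk k \<in> S n" by (rule inv_into_into)
  then show ?thesis by simp
qed

lemma rk_inv[simp]: "k < 2^n \<Longrightarrow> rk (inv_into (S n) rk k) = k"
proof -
  assume k: "k < 2^n"
  have "k \<in> rk ` S n" using rk_bij[of n] k unfolding bij_betw_def by simp
  then show ?thesis by (rule f_inv_into_f)
qed

lemma sum_rk:
  assumes "A \<subseteq> S n" "rk ` A = K"
  shows "(\<Sum>a\<in>A. seqprob p a) = (\<Sum>k\<in>K. sq p n k)"
proof -
  have inj: "inj_on rk A" using rk_inj[of n] assms(1) inj_on_subset by blast
  have "(\<Sum>k\<in>K. sq p n k) = (\<Sum>a\<in>A. sq p n (rk a))"
    using sum.reindex[OF inj, of "sq p n"] assms(2) by simp
  also have "\<dots> = (\<Sum>a\<in>A. seqprob p a)"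
    by (rule sum.cong) (use assms(1) in \<open>auto simp: sq_def\<close>)
  finally show ?thesis by simp
qed

lemma rk_image_le: "length x = n \<Longrightarrow> rk ` {a. length a = n \<and> rk a \<le> rk x} = {..rk x}"
proof
  assume "length x = n"
  then show "{..rk x} \<subseteq> rk ` {a. length a = n \<and> rk a \<le> rk x}"
  proof -
    { fix k assume k: "k \<le> rk x"
      then have "k < 2^n" using rk_lt \<open>length x = n\<close> by (meson le_less_trans)
      then have "k = rk (inv_into (S n) rk k) \<and> length (inv_into (S n) rk k) = n"
        by (simp add: inv_in)
      then have "k \<in> rk ` {a. length a = n \<and> rk a \<le> rk x}" using k by (metis (mono_tags, lifting) image_eqI mem_Collect_eq) }
    then show ?thesis by auto
  qed
qed auto

lemma cdf_sum: "length x = n \<Longrightarrow> cdf p n x = (\<Sum>k\<le>rk x. sq p n k)"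
proof -
  assume x: "length x = n"
  have e: "{a. length a = n \<and> gray_le n a x} = {a. length a = n \<and> rk a \<le> rk x}"
    using x gray_le_rk by blast
  show ?thesis unfolding cdf_def e
    by (rule sum_rk) (use x rk_image_le in auto)
qed

lemma has_pred_rk: "length x = n \<Longrightarrow> has_gray_pred n x \<longleftrightarrow> 0 < rk x"
proof
  assume x: "length x = n"
  show "has_gray_pred n x \<Longrightarrow> 0 < rk x"
  proof -
    assume "has_gray_pred n x"
    then obtain y where y: "length y = n" "gray_le n y x" "y \<noteq> x" unfolding has_gray_pred_def by blast
    have "rk y \<le> rk x" using y x by (simp add: gray_le_rk)
    moreover have "rk y \<noteq> rk x" using y x rk_inj[of n] unfolding inj_on_def by blast
    ultimately show "0 < rk x" by simp
  qed
  assume pos: "0 < rk x"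
  have lt: "(0::nat) < 2^n" by simp
  let ?y = "inv_into (S n) rk 0"
  have "length ?y = n" "rk ?y = 0" using inv_in[OF lt] rk_inv[OF lt] by blast+
  moreover have "?y \<noteq> x"
  proof
    assume "?y = x"
    then have "rk x = rk ?y" by (rule arg_cong[OF sym])
    then show False using pos \<open>rk ?y = 0\<close> by linarith
  qed
  ultimately have "length ?y = n \<and> gray_le n ?y x \<and> ?y \<noteq> x"
    using pos x gray_le_rk by simp
  then show "has_gray_pred n x" unfolding has_gray_pred_def by blast
qed

lemma pred_rk:
  assumes x: "length x = n" and pos: "0 < rk x"
  shows "gray_pred n x = inv_into (S n) rk (rk x - 1)"
  unfolding gray_pred_def
proof (rule the_equality)
  have lt: "rk x - 1 < 2^n" using rk_lt[OF x] by linarith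
  let ?y = "inv_into (S n) rk (rk x - 1)"
  have ly: "length ?y = n" and ry: "rk ?y = rk x - 1" using inv_in[OF lt] rk_inv[OF lt] by blast+
  have "\<forall>z. length z = n \<and> gray_le n z x \<and> z \<noteq> x \<longrightarrow> gray_le n z ?y"
  proof (intro allI impI)
    fix z assume z: "length z = n \<and> gray_le n z x \<and> z \<noteq> x"
    have "rk z \<le> rk x" using z x gray_le_rk by blast
    moreover have "rk z \<noteq> rk x" using z x rk_inj[of n] unfolding inj_on_def by blast
    ultimately show "gray_le n z ?y" using z ly ry by (simp add: gray_le_rk)
  qed
  moreover have "?y \<noteq> x" using ry pos by auto
  moreover have "gray_le n ?y x" using ly ry x by (simp add: gray_le_rk)
  ultimately show "length ?y = n \<and> gray_le n ?y x \<and> ?y \<noteq> x \<and>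
      (\<forall>z. length z = n \<and> gray_le n z x \<and> z \<noteq> x \<longrightarrow> gray_le n z ?y)"
    using ly by blast
next
  fix y assume y: "length y = n \<and> gray_le n y x \<and> y \<noteq> x \<and>
      (\<forall>z. length z = n \<and> gray_le n z x \<and> z \<noteq> x \<longrightarrow> gray_le n z y)"
  have lt: "rk x - 1 < 2^n" using rk_lt[OF x] by linarith
  let ?y = "inv_into (S n) rk (rk x - 1)"
  have ly: "length ?y = n" and ry: "rk ?y = rk x - 1" using inv_in[OF lt] rk_inv[OF lt] by blast+
  have "rk y \<noteq> rk x" using y x rk_inj[of n] unfolding inj_on_def by blast
  moreover have "rk y \<le> rk x" using y x gray_le_rk by blast
  ultimately have "rk y < rk x" by simp
  moreover have "gray_le n ?y y"
    using y ly ry pos x by (auto simp: gray_le_rk)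
  then have "rk x - 1 \<le> rk y" using ly ry y gray_le_rk by metis
  ultimately have "rk y = rk x - 1" by linarith
  then show "y = ?y" using y by (metis inv_rk)
qed

lemma cdf_prev_sum: "length x = n \<Longrightarrow> cdf_prev p n x = (\<Sum>k<rk x. sq p n k)"
proof -
  assume x: "length x = n"
  show ?thesis
  proof (cases "rk x = 0")
    case True then show ?thesis using has_pred_rk[OF x] by (simp add: cdf_prev_def)
  next
    case False
    have lt: "rk x - 1 < 2^n" using rk_lt[OF x] by linarith
    have "cdf_prev p n x = cdf p n (inv_into (S n) rk (rk x - 1))"
      using False has_pred_rk[OF x] pred_rk[OF x] by (simp add: cdf_prev_def)
    also have "\<dots> = (\<Sum>k\<le>rk x - 1. sq p n k)"
      using cdf_sum[OF inv_in[OF lt]] lt by simp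
    also have "{..rk x - 1} = {..<rk x}" using False by auto
    finally show ?thesis .
  qed
qed


lemma g_append: "g c (t @ w) = g c t @ g (last (c # t)) w"
  by (induction t arbitrary: c) auto

lemma g_rep: "g c (replicate i c) = replicate i False"
  by (induction i) auto

lemma g_rep2: "g False (replicate j True) = g True (replicate j False)"
  by (cases j) (auto simp: g_rep)

lemma val_append: "val (t @ w) = val t * 2^length w + val w"
  by (induction t) (auto simp: power_add algebra_simps)

lemma val_rep_T: "val (replicate j True) = 2^j - 1"
proof (induction j)
  case (Suc j)
  have "(1::nat) \<le> 2^j" by simp
  then show ?case using Suc by simp
qed simp

lemma val_rep_F: "val (replicate j False) = 0"
  by (induction j) auto

lemma decomp: "False \<in> set a \<Longrightarrow> \<exists>t j. a = t @ False # replicate j True"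
proof (induction a rule: rev_induct)
  case Nil then show ?case by simp
next
  case (snoc x xs)
  show ?case
  proof (cases x)
    case False then show ?thesis by (intro exI[of _ xs] exI[of _ 0]) simp
  next
    case True
    then have "False \<in> set xs" using snoc.prems by auto
    then obtain t j where "xs = t @ False # replicate j True" using snoc.IH by blast
    then have "xs @ [x] = t @ False # replicate (Suc j) True"
      using True by (simp add: replicate_append_same)
    then show ?thesis by blast
  qed
qed

lemma all_true: "False \<notin> set a \<Longrightarrow> a = replicate (length a) True"
  by (induction a) auto

lemma neighbor:
  assumes k: "k + 1 < 2^n"
  shows "\<exists>u c v. inv_into (S n) rk k = u @ c # v \<and> inv_into (S n) rk (k+1) = u @ (\<not> c) # v"
proof -
  have k': "k < 2^n" using k by simp
  let ?y = "inv_into (S n) rk k"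
  have ly: "length ?y = n" and ry: "rk ?y = k" using inv_in[OF k'] rk_inv[OF k'] by blast+
  define a where "a = h False ?y"
  have la: "length a = n" and va: "val a = k" using ly ry by (auto simp: a_def rk_def)
  have ya: "?y = g False a" by (simp add: a_def)
  have "False \<in> set a"
  proof (rule ccontr)
    assume "False \<notin> set a"
    then have "a = replicate n True" using all_true la by metis
    then have "val a = 2^n - 1" by (simp add: val_rep_T)
    then show False using va k by simp
  qed
  then obtain t j where a: "a = t @ False # replicate j True" using decomp by blast
  define b where "b = t @ True # replicate j False"
  have lb: "length b = n" using la by (simp add: a b_def)
  have "val b = val a + 1"
  proof -
    have "(1::nat) \<le> 2^j" by simp
    then show ?thesis unfolding a b_def val_append by (simp add: val_rep_T val_rep_F)
  qed
  then have vb: "val b = k + 1" using va by simp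
  have "rk (g False b) = k + 1" by (simp add: rk_def vb)
  then have z: "inv_into (S n) rk (k+1) = g False b"
    using inv_rk[of "g False b" n] lb by simp
  define d where "d = last (False # t)"
  have "?y = g False t @ (False \<noteq> d) # g True (replicate j False)"
    unfolding ya a g_append d_def[symmetric] by (simp add: g_rep2)
  moreover have "g False b = g False t @ (\<not> (False \<noteq> d)) # g True (replicate j False)"
    unfolding b_def g_append d_def[symmetric] by simp
  ultimately show ?thesis using z
    by (intro exI[of _ "g False t"] exI[of _ "False \<noteq> d"] exI[of _ "g True (replicate j False)"]) simp
qed

lemma seqprob_append: "seqprob p (u @ w) = seqprob p u * seqprob p w"
  by (simp add: seqprob_def)

lemma seqprob_pos: "0 < p False \<Longrightarrow> 0 < p True \<Longrightarrow> 0 < seqprob p x"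
proof (induction x)
  case Nil then show ?case by (simp add: seqprob_def)
next
  case (Cons b x)
  have "0 < p b" using Cons.prems by (cases b) auto
  then show ?case using Cons by (simp add: seqprob_def)
qed

lemma rho_pos: "0 < p False \<Longrightarrow> 0 < p True \<Longrightarrow> 0 < rho p"
  unfolding rho_def by (simp add: less_max_iff_disj)

lemma ratio:
  assumes pF: "0 < p False" and pT: "0 < p True"
  shows "seqprob p (u @ c # v) / rho p \<le> seqprob p (u @ (\<not> c) # v)"
proof -
  have r: "0 < rho p" using rho_pos pF pT .
  have pc: "0 < p c" "0 < p (\<not> c)" using pF pT by (cases c; simp)+
  have "p c / p (\<not> c) \<le> rho p" unfolding rho_def by (cases c) auto
  then have "p c \<le> rho p * p (\<not> c)" using pc by (simp add: divide_le_eq)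
  then have le: "p c / rho p \<le> p (\<not> c)" using r by (simp add: divide_le_eq mult.commute)
  have A: "0 < seqprob p u" "0 < seqprob p v" using seqprob_pos pF pT by auto
  have "seqprob p (u @ c # v) / rho p = seqprob p u * (p c / rho p) * seqprob p v"
    by (simp add: seqprob_append seqprob_def)
  also have "\<dots> \<le> seqprob p u * p (\<not> c) * seqprob p v"
    using le A by (intro mult_right_mono mult_left_mono) auto
  also have "\<dots> = seqprob p (u @ (\<not> c) # v)"
    by (simp add: seqprob_append seqprob_def)
  finally show ?thesis .
qed

lemma sq_neighbor:
  assumes pF: "0 < p False" and pT: "0 < p True" and k: "k + 1 < 2^n"
  shows "sq p n k / rho p \<le> sq p n (k+1)" "sq p n (k+1) / rho p \<le> sq p n k"
proof -
  obtain u c v where e: "inv_into (S n) rk k = u @ c # v" "inv_into (S n) rk (k+1) = u @ (\<not> c) # v"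
    using neighbor[OF k] by blast
  show "sq p n k / rho p \<le> sq p n (k+1)" unfolding sq_def e using ratio[OF pF pT] .
  show "sq p n (k+1) / rho p \<le> sq p n k" unfolding sq_def e using ratio[OF pF pT, of u "\<not> c" v] by simp
qed

definition M :: "(bool \<Rightarrow> real) \<Rightarrow> nat \<Rightarrow> nat \<Rightarrow> real" where
  "M p n k = (\<Sum>j<k. sq p n j) + sq p n k / 2"

lemma sq_pos: "0 < p False \<Longrightarrow> 0 < p True \<Longrightarrow> 0 < sq p n k"
  unfolding sq_def by (rule seqprob_pos)

lemma M_Suc: "M p n (Suc k) - M p n k = sq p n k / 2 + sq p n (Suc k) / 2"
  unfolding M_def by simp

lemma M_mono:
  assumes pF: "0 < p False" and pT: "0 < p True" and ij: "i \<le> j"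
  shows "M p n i \<le> M p n j"
proof -
  have "incseq (M p n)"
  proof (rule incseq_SucI)
    fix k show "M p n k \<le> M p n (Suc k)"
      using M_Suc[of p n k] sq_pos[OF pF pT, of n k] sq_pos[OF pF pT, of n "Suc k"] by simp
  qed
  then show ?thesis using ij by (simp add: incseq_def)
qed

lemma M_sep:
  assumes pF: "0 < p False" and pT: "0 < p True" and ij: "i < j" and j: "j < 2^n"
  shows "sq p n i / 2 + sq p n i / (2 * rho p) \<le> M p n j - M p n i"
    "sq p n j / 2 + sq p n j / (2 * rho p) \<le> M p n j - M p n i"
proof -
  have r: "0 < rho p" using rho_pos pF pT .
  have "M p n (Suc i) \<le> M p n j" using M_mono[OF pF pT] ij by simp
  moreover have "sq p n i / rho p \<le> sq p n (Suc i)" using sq_neighbor(1)[OF pF pT, of i n] ij j by simp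
  ultimately show "sq p n i / 2 + sq p n i / (2 * rho p) \<le> M p n j - M p n i"
    using M_Suc[of p n i] by simp
  obtain j' where j': "j = Suc j'" using ij by (cases j) auto
  have "M p n i \<le> M p n j'" using M_mono[OF pF pT] ij j' by simp
  moreover have "sq p n j / rho p \<le> sq p n j'" using sq_neighbor(2)[OF pF pT, of j' n] j j' by simp
  ultimately show "sq p n j / 2 + sq p n j / (2 * rho p) \<le> M p n j - M p n i"
    using M_Suc[of p n j'] j' by simp
qed


lemma ud_generic:
  assumes ne: "\<forall>x\<in>A. c x \<noteq> []"
    and pf: "\<forall>x\<in>A. \<forall>y\<in>A. x \<noteq> y \<longrightarrow> \<not> (\<exists>w. c y = c x @ w)"
  shows "set xs \<subseteq> A \<Longrightarrow> set ys \<subseteq> A \<Longrightarrow> concat (map c xs) = concat (map c ys) \<Longrightarrow> xs = ys"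
proof (induction xs arbitrary: ys)
  case Nil
  then show ?case using ne by (cases ys) auto
next
  case (Cons a xs)
  show ?case
  proof (cases ys)
    case Nil then show ?thesis using Cons.prems ne by auto
  next
    case (Cons b ys')
    have aA: "a \<in> A" and bA: "b \<in> A" using Cons.prems \<open>ys = b # ys'\<close> by auto
    have eq: "c a @ concat (map c xs) = c b @ concat (map c ys')"
      using Cons.prems(3) \<open>ys = b # ys'\<close> by simp
    have ab: "a = b"
    proof (rule ccontr)
      assume "a \<noteq> b"
      from eq obtain us where "c a = c b @ us \<or> c a @ us = c b"
        using append_eq_append_conv2 by metis
      then show False using pf aA bA \<open>a \<noteq> b\<close> by metis
    qed
    then have "concat (map c xs) = concat (map c ys')" using eq by simp
    then have "xs = ys'" using Cons.IH Cons.prems \<open>ys = b # ys'\<close> by auto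
    then show ?thesis using ab \<open>ys = b # ys'\<close> by simp
  qed
qed

lemma floor_double: "\<lfloor>2 * y\<rfloor> = 2 * \<lfloor>y\<rfloor> + (if odd \<lfloor>2 * y\<rfloor> then 1 else 0)" for y :: real
proof -
  have a: "2 * \<lfloor>y\<rfloor> \<le> \<lfloor>2 * y\<rfloor>" by (simp add: le_floor_iff)
  have b: "\<lfloor>2 * y\<rfloor> < 2 * \<lfloor>y\<rfloor> + 2"
  proof -
    have "y < \<lfloor>y\<rfloor> + 1" by linarith
    then have "2 * y < 2 * \<lfloor>y\<rfloor> + 2" by linarith
    then show ?thesis by (simp add: floor_less_iff)
  qed
  from a b have "\<lfloor>2 * y\<rfloor> = 2 * \<lfloor>y\<rfloor> \<or> \<lfloor>2 * y\<rfloor> = 2 * \<lfloor>y\<rfloor> + 1" by linarith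
  then show ?thesis by auto
qed

lemma length_digits[simp]: "length (bin_digits v l) = l"
  by (simp add: bin_digits_def)

lemma take_digits: "l \<le> l' \<Longrightarrow> take l (bin_digits v l') = bin_digits v l"
  unfolding bin_digits_def take_map by (subst take_upt) auto

lemma digits_Suc: "bin_digits v (Suc l) = bin_digits v l @ [odd \<lfloor>v * 2 ^ Suc l\<rfloor>]"
  by (simp add: bin_digits_def)

lemma digits_floor:
  assumes "0 \<le> v" "v < 1" "0 \<le> u" "u < 1"
  shows "bin_digits v l = bin_digits u l \<Longrightarrow> \<lfloor>v * 2^l\<rfloor> = \<lfloor>u * 2^l\<rfloor>"
proof (induction l)
  case 0
  have "\<lfloor>v\<rfloor> = 0" "\<lfloor>u\<rfloor> = 0" using assms by (simp_all add: floor_eq_iff)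
  then show ?case by simp
next
  case (Suc l)
  have h1: "bin_digits v l = bin_digits u l" and h2: "odd \<lfloor>v * 2 ^ Suc l\<rfloor> = odd \<lfloor>u * 2 ^ Suc l\<rfloor>"
    using Suc.prems unfolding digits_Suc by auto
  have IH: "\<lfloor>v * 2^l\<rfloor> = \<lfloor>u * 2^l\<rfloor>" using Suc.IH h1 .
  have ev: "v * 2 ^ Suc l = 2 * (v * 2^l)" "u * 2 ^ Suc l = 2 * (u * 2^l)" by simp_all
  show ?case using floor_double[of "v * 2^l"] floor_double[of "u * 2^l"] IH h2 unfolding ev
    by presburger
qed

lemma floor_close: "\<lfloor>v * 2^l\<rfloor> = \<lfloor>u * 2^l\<rfloor> \<Longrightarrow> \<bar>v - u\<bar> * 2^l < (1::real)"
proof -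
  assume e: "\<lfloor>v * 2^l\<rfloor> = \<lfloor>u * 2^l\<rfloor>"
  have "\<bar>v * 2^l - u * 2^l\<bar> < 1" using e by linarith
  then show ?thesis by (simp add: abs_mult left_diff_distrib[symmetric])
qed

lemma ell_bound:
  assumes A: "0 < A"
  shows "2 / A \<le> (2::real) ^ nat (\<lceil>- log 2 A\<rceil> + 1)"
proof -
  let ?z = "\<lceil>- log 2 A\<rceil> + 1"
  have "1 - log 2 A \<le> real (nat ?z)" by linarith
  then have "2 powr (1 - log 2 A) \<le> 2 powr real (nat ?z)" by simp
  moreover have "2 powr (1 - log 2 A) = 2 / A" using A by (simp add: powr_diff)
  moreover have "2 powr real (nat ?z) = (2::real) ^ nat ?z" by (simp add: powr_realpow)
  ultimately show ?thesis by simp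
qed

lemma S_Suc: "S (Suc n) = Cons True ` S n \<union> Cons False ` S n"
proof
  show "S (Suc n) \<subseteq> Cons True ` S n \<union> Cons False ` S n"
  proof
    fix x assume "x \<in> S (Suc n)"
    then obtain b xs where "x = b # xs" "length xs = n" by (auto simp: length_Suc_conv)
    then show "x \<in> Cons True ` S n \<union> Cons False ` S n" by (cases b) auto
  qed
qed auto


lemma sum_S: "(\<Sum>x\<in>S n. seqprob p x) = (p True + p False) ^ n"
proof (induction n)
  case 0
  have "S 0 = {[]}" by auto
  then show ?case by (simp add: seqprob_def)
next
  case (Suc n)
  have d: "Cons True ` S n \<inter> Cons False ` S n = {}" by auto
  have "(\<Sum>x\<in>S (Suc n). seqprob p x) = (\<Sum>x\<in>Cons True ` S n. seqprob p x) + (\<Sum>x\<in>Cons False ` S n. seqprob p x)"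
    unfolding S_Suc by (rule sum.union_disjoint) (use finite_S d in auto)
  also have "\<dots> = (\<Sum>x\<in>S n. seqprob p (True # x)) + (\<Sum>x\<in>S n. seqprob p (False # x))"
    by (simp add: sum.reindex)
  also have "\<dots> = p True * (\<Sum>x\<in>S n. seqprob p x) + p False * (\<Sum>x\<in>S n. seqprob p x)"
    by (simp add: seqprob_def sum_distrib_left)
  finally show ?case using Suc by (simp add: algebra_simps)
qed

lemma sum_S_log:
  assumes pF: "0 < p False" and pT: "0 < p True" and s: "p False + p True = 1"
  shows "(\<Sum>x\<in>S n. seqprob p x * log 2 (seqprob p x)) = real n * (- entropy2 p)"
proof (induction n)
  case 0
  have "S 0 = {[]}" by auto
  then show ?case by (simp add: seqprob_def)
next
  case (Suc n)
  have d: "Cons True ` S n \<inter> Cons False ` S n = {}" by auto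
  let ?f = "\<lambda>x. seqprob p x * log 2 (seqprob p x)"
  have one: "(\<Sum>x\<in>S n. seqprob p x) = 1" using sum_S[of p n] s by (simp add: add.commute)
  have cons: "?f (b # x) = p b * log 2 (p b) * seqprob p x + p b * ?f x" for b x
  proof -
    have "0 < p b" using pF pT by (cases b) auto
    moreover have "0 < seqprob p x" using seqprob_pos pF pT by blast
    ultimately show ?thesis by (simp add: seqprob_def log_mult algebra_simps)
  qed
  have "(\<Sum>x\<in>S (Suc n). ?f x) = (\<Sum>x\<in>Cons True ` S n. ?f x) + (\<Sum>x\<in>Cons False ` S n. ?f x)"
    unfolding S_Suc by (rule sum.union_disjoint) (use finite_S d in auto)
  also have "\<dots> = (\<Sum>x\<in>S n. ?f (True # x)) + (\<Sum>x\<in>S n. ?f (False # x))"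
    by (simp add: sum.reindex)
  also have "\<dots> = p True * log 2 (p True) + p True * (\<Sum>x\<in>S n. ?f x)
      + (p False * log 2 (p False) + p False * (\<Sum>x\<in>S n. ?f x))"
    unfolding cons by (simp add: sum.distrib sum_distrib_left[symmetric] one)
  also have "\<dots> = real (Suc n) * (- entropy2 p)"
  proof -
    have e: "p True * (real n * - entropy2 p) + p False * (real n * - entropy2 p) = real n * - entropy2 p"
    proof -
      have "(p True + p False) * (real n * - entropy2 p) = real n * - entropy2 p"
        using s by (simp add: add.commute)
      then show ?thesis by (simp only: distrib_right)
    qed
    have h: "- entropy2 p = p False * log 2 (p False) + p True * log 2 (p True)" by (simp add: entropy2_def)
    have f: "real (Suc n) * (- entropy2 p) = real n * (- entropy2 p) + - entropy2 p" by (simp add: algebra_simps)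
    show ?thesis unfolding Suc using e h f by linarith
  qed
  finally show ?case .
qed


lemma rho_gt1:
  assumes pF: "0 < p False" and pT: "0 < p True" and ne: "p False \<noteq> p True"
  shows "1 < rho p"
proof (cases "p False < p True")
  case True then show ?thesis using pF pT unfolding rho_def by (simp add: less_max_iff_disj)
next
  case False then have "p True < p False" using ne by simp
  then show ?thesis using pF pT unfolding rho_def by (simp add: less_max_iff_disj)
qed

lemma seqprob_le1:
  assumes pF: "0 < p False" and pT: "0 < p True" and s: "p False + p True = 1"
  shows "seqprob p x \<le> 1"
proof (induction x)
  case Nil then show ?case by (simp add: seqprob_def)
next
  case (Cons b x)
  have "0 \<le> p b" "p b \<le> 1" using pF pT s by (cases b; simp)+
  moreover have "0 \<le> seqprob p x" using seqprob_pos[OF pF pT] less_imp_le by blast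
  ultimately have "p b * seqprob p x \<le> 1 * 1" using Cons by (intro mult_mono) auto
  then show ?case by (simp add: seqprob_def)
qed

lemma sum_sq:
  assumes s: "p False + p True = 1"
  shows "(\<Sum>k<2^n. sq p n k) = 1"
proof -
  have "(\<Sum>x\<in>S n. seqprob p x) = (\<Sum>k<2^n. sq p n k)"
    by (rule sum_rk) (use rk_bij[of n] in \<open>auto simp: bij_betw_def\<close>)
  then show ?thesis using sum_S[of p n] s by (simp add: add.commute)
qed

lemma M_range:
  assumes pF: "0 < p False" and pT: "0 < p True" and s: "p False + p True = 1" and k: "k < 2^n"
  shows "0 \<le> M p n k" "M p n k < 1"
proof -
  have pos: "\<And>j. 0 < sq p n j" using sq_pos[OF pF pT] by blast
  show "0 \<le> M p n k" unfolding M_def using pos by (simp add: sum_nonneg less_imp_le)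
  have "M p n k < (\<Sum>j<Suc k. sq p n j)" unfolding M_def using pos[of k] by simp
  also have "\<dots> \<le> (\<Sum>j<2^n. sq p n j)"
    by (rule sum_mono2) (use k pos in \<open>auto intro: less_imp_le\<close>)
  finally show "M p n k < 1" using sum_sq[OF s] by simp
qed

lemma mid_M: "length x = n \<Longrightarrow> cdf_prev p n x + seqprob p x / 2 = M p n (rk x)"
  unfolding M_def by (simp add: cdf_prev_sum sq_def)

lemma sq_rk: "length x = n \<Longrightarrow> sq p n (rk x) = seqprob p x"
  by (simp add: sq_def)

theorem theorem1:
  fixes p :: "bool \<Rightarrow> real" and n :: nat
  assumes "0 < p False" and "0 < p True" and "p False + p True = 1"
    and "p False \<noteq> p True"
  shows "uniquely_decodable n (sfeg p n) \<and>
    (\<Sum>x\<in>{x. length x = n}. seqprob p x * real (length (sfeg p n x)))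
      < real n * entropy2 p + 2 - log 2 ((1 + rho p) / rho p)"
proof -
  note pF = assms(1) and pT = assms(2) and s = assms(3)
  have r1: "1 < rho p" using rho_gt1 assms by blast
  have al: "alpha_s p = 1 + 1 / rho p" using r1 unfolding alpha_s_def by (simp add: field_simps)
  have al1: "1 < alpha_s p" "alpha_s p < 2" using r1 unfolding al by (simp_all add: field_simps)
  have ppos: "\<And>x. 0 < seqprob p x" using seqprob_pos[OF pF pT] by blast
  have ple: "\<And>x. seqprob p x \<le> 1" using seqprob_le1[OF pF pT s] by blast
  have Apos: "\<And>x. 0 < alpha_s p * seqprob p x" using al1 ppos by simp
  have Alt2: "\<And>x. alpha_s p * seqprob p x < 2"
  proof -
    fix x have "alpha_s p * seqprob p x \<le> alpha_s p * 1" by (rule mult_left_mono) (use ple[of x] al1 in auto)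
    then show "alpha_s p * seqprob p x < 2" using al1 by linarith
  qed
  have ceil0: "\<And>x. 0 \<le> \<lceil>- log 2 (alpha_s p * seqprob p x)\<rceil>"
  proof -
    fix x have "log 2 (alpha_s p * seqprob p x) < log 2 2" using Alt2[of x] Apos[of x] by simp
    then show "0 \<le> \<lceil>- log 2 (alpha_s p * seqprob p x)\<rceil>" by simp
  qed
  have ell: "\<And>x. real (ell_s p x) = real_of_int \<lceil>- log 2 (alpha_s p * seqprob p x)\<rceil> + 1"
    unfolding ell_s_def using ceil0 by simp
  have len: "\<And>x. length (sfeg p n x) = ell_s p x" by (simp add: sfeg_def)
  have ne: "\<forall>x\<in>S n. sfeg p n x \<noteq> []"
  proof
    fix x have "1 \<le> real (ell_s p x)" using ell[of x] ceil0[of x] by simp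
    then have "length (sfeg p n x) \<noteq> 0" using len[of x] by simp
    then show "sfeg p n x \<noteq> []" by auto
  qed
  have pf: "\<forall>x\<in>S n. \<forall>y\<in>S n. x \<noteq> y \<longrightarrow> \<not> (\<exists>w. sfeg p n y = sfeg p n x @ w)"
  proof (intro ballI impI notI)
    fix x y assume x: "x \<in> S n" and y: "y \<in> S n" and xy: "x \<noteq> y"
    assume "\<exists>w. sfeg p n y = sfeg p n x @ w"
    then obtain w where w: "sfeg p n y = sfeg p n x @ w" by blast
    let ?lx = "ell_s p x" and ?ly = "ell_s p y"
    have lxy: "?lx \<le> ?ly" using arg_cong[OF w, of length] len by simp
    define mx where "mx = M p n (rk x)"
    define my where "my = M p n (rk y)"
    have sx: "sfeg p n x = bin_digits mx ?lx" using x mid_M[of x n p] by (simp add: sfeg_def mx_def)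
    have sy: "sfeg p n y = bin_digits my ?ly" using y mid_M[of y n p] by (simp add: sfeg_def my_def)
    have "take ?lx (sfeg p n y) = sfeg p n x" using w len by simp
    then have dig: "bin_digits my ?lx = bin_digits mx ?lx" using take_digits[OF lxy] sx sy by simp
    have rx: "rk x < 2^n" and ry: "rk y < 2^n" using rk_lt[of x n] rk_lt[of y n] x y by auto
    have "0 \<le> mx" "mx < 1" "0 \<le> my" "my < 1"
      unfolding mx_def my_def using M_range[OF pF pT s] rx ry by auto
    then have close: "\<bar>my - mx\<bar> * 2 ^ ?lx < 1" using digits_floor dig floor_close by metis
    have rne: "rk x \<noteq> rk y" using rk_inj[of n] x y xy unfolding inj_on_def by blast
    have sep: "seqprob p x / 2 + seqprob p x / (2 * rho p) \<le> \<bar>my - mx\<bar>"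
    proof (cases "rk x < rk y")
      case True
      then show ?thesis using M_sep(1)[OF pF pT True ry] sq_rk x unfolding mx_def my_def by simp
    next
      case False
      then have "rk y < rk x" using rne by simp
      then show ?thesis using M_sep(2)[OF pF pT _ rx] sq_rk x unfolding mx_def my_def by force
    qed
    have eqA: "seqprob p x / 2 + seqprob p x / (2 * rho p) = alpha_s p * seqprob p x / 2"
      unfolding al using r1 by (simp add: field_simps)
    have eb: "2 / (alpha_s p * seqprob p x) \<le> 2 ^ ?lx" unfolding ell_s_def by (rule ell_bound[OF Apos])
    have "1 = (alpha_s p * seqprob p x / 2) * (2 / (alpha_s p * seqprob p x))"
      using Apos[of x] ppos[of x] al1 by (simp add: field_simps)
    also have "\<dots> \<le> \<bar>my - mx\<bar> * 2 ^ ?lx"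
      using sep eb Apos[of x] unfolding eqA by (intro mult_mono) auto
    finally show False using close by simp
  qed
  have ud: "uniquely_decodable n (sfeg p n)"
    unfolding uniquely_decodable_def
  proof (intro allI impI)
    fix xs ys :: "bool list list"
    assume "\<forall>x\<in>set xs. length x = n" "\<forall>y\<in>set ys. length y = n"
      "concat (map (sfeg p n) xs) = concat (map (sfeg p n) ys)"
    then show "xs = ys" using ud_generic[OF ne pf, of xs ys] by auto
  qed
  have "(\<Sum>x\<in>S n. seqprob p x * real (length (sfeg p n x)))
      < (\<Sum>x\<in>S n. seqprob p x * (- log 2 (alpha_s p) - log 2 (seqprob p x) + 2))"
  proof (rule sum_strict_mono)
    show "finite (S n)" by (rule finite_S)
    show "S n \<noteq> {}" by (metis (mono_tags) empty_iff length_replicate mem_Collect_eq)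
    fix x assume "x \<in> S n"
    have "real (length (sfeg p n x)) < - log 2 (alpha_s p * seqprob p x) + 2"
      unfolding len ell by linarith
    also have "\<dots> = - log 2 (alpha_s p) - log 2 (seqprob p x) + 2"
      using al1 ppos[of x] by (simp add: log_mult)
    finally show "seqprob p x * real (length (sfeg p n x))
        < seqprob p x * (- log 2 (alpha_s p) - log 2 (seqprob p x) + 2)"
      using ppos[of x] by simp
  qed
  also have "\<dots> = (2 - log 2 (alpha_s p)) * (\<Sum>x\<in>S n. seqprob p x)
      - (\<Sum>x\<in>S n. seqprob p x * log 2 (seqprob p x))"
    by (simp add: algebra_simps sum_distrib_left sum_subtractf sum.distrib)
  also have "\<dots> = real n * entropy2 p + 2 - log 2 ((1 + rho p) / rho p)"
    using sum_S[of p n] s sum_S_log[OF pF pT s, of n] by (simp add: alpha_s_def add.commute)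
  finally show ?thesis using ud by simp
qed

end
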